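(* Let $n\le k$ be positive integers. For every $\sigma$-structure $\mathcal{A}$: (a) there is a (unique) homomorphism $\epsilon^{n,k}_{\mathcal{A}}:\mathbb{H}_{n,k}\mathcal{A}\to\mathcal{A}$ with $\epsilon_{\mathcal{A}}=\epsilon^{n,k}_{\mathcal{A}}\circ q_n$; (b) the map $q_n\circ\mathbb{T}_kq_n\circ\delta_{\mathcal{A}}:\mathbb{T}_k\mathcal{A}\to\mathbb{H}_{n,k}\mathbb{H}_{n,k}\mathcal{A}$ is constant on $\approx_n$-classes, so it induces a well-defined map $\delta^{n,k}_{\mathcal{A}}:\mathbb{H}_{n,k}\mathcal{A}\to\mathbb{H}_{n,k}\mathbb{H}_{n,k}\mathcal{A}$ with $\delta^{n,k}_{\mathcal{A}}\circ q_n=q_n\circ\mathbb{T}_kq_n\circ\delta_{\mathcal{A}}$. The families $\epsilon^{n,k}$ and $\delta^{n,k}$ are natural transformations $\mathbb{H}_{n,k}\Rightarrow\mathrm{Id}$ and $\mathbb{H}_{n,k}\Rightarrow\mathbb{H}_{n,k}\mathbb{H}_{n,k}$ on the category of $\sigma$-structures and homomorphisms.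
   Context: For $m\in\mathbb{N}$, $[m]=\{1,\dots,m\}$. For a $\sigma$-structure $\mathcal{A}$, $\mathbb{T}_k\mathcal{A}$ has universe the nonempty finite lists over $A\times[k]$; $\epsilon_{\mathcal{A}}(s)$ is the first component of the last pair of $s$; $(s_1,\dots,s_r)\in R^{\mathbb{T}_k\mathcal{A}}$ iff the $s_i$ are pairwise prefix-comparable, $(\epsilon_{\mathcal{A}}(s_1),\dots,\epsilon_{\mathcal{A}}(s_r))\in R^{\mathcal{A}}$, and whenever $s_i$ is a prefix of $s_j$ ending with $(a,p)$, no prefix of $s_j$ properly extending $s_i$ ends with a pair $(a',p)$. For a homomorphism $f$, $\mathbb{T}_kf$ applies $f$ to first components. $\delta_{\mathcal{A}}[(a_1,p_1),\dots,(a_m,p_m)]=[(s_1,p_1),\dots,(s_m,p_m)]$ with $s_i=[(a_1,p_1),\dots,(a_i,p_i)]$ (these are the counit and comultiplication of the pebbling comonad $\mathbb{T}_k$). A list over $A\times[k]$ is basic if it has at most $n$ pairs with distinct pebble indices; $S_n(s)=[s]$ if $s$ is basic, else $S_n(s)=[a];S_n(t)$ with $s=a\cdot t$ and $a$ the longest basic prefix. For $p\in[k]$ and $S_n(s)=t;[s']$ ($s'$ the last block), $\alpha_n(s,p)=t;[s']$ if $|s'|=n$ or $p$ occurs in $s'$, else $t$. $[s;(a,i)]\approx_n[t;(b,j)]$ iff $a=b$ and $\alpha_n(s,i)=\alpha_n(t,j)$. $\mathbb{H}_{n,k}\mathcal{A}=\mathbb{T}_k\mathcal{A}/{\approx_n}$,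 where a tuple of classes is related iff some choice of representatives is related in $\mathbb{T}_k\mathcal{A}$; $q_n$ denotes the quotient map $\mathbb{T}_k\mathcal{C}\to\mathbb{H}_{n,k}\mathcal{C}$ for any structure $\mathcal{C}$; $\mathbb{H}_{n,k}f$ is the map induced by $\mathbb{T}_kf$. *)

theory Defs
  imports Main "HOL-Library.Sublist"
begin

record ('r, 'a) struc =
  univ :: "'a set"
  rels :: "'r \<Rightarrow> 'a list set"

definition sigma_struc :: "('r \<Rightarrow> nat) \<Rightarrow> ('r, 'a) struc \<Rightarrow> bool" where
  "sigma_struc ar A \<longleftrightarrow> (\<forall>R. \<forall>t \<in> rels A R. length t = ar R \<and> set t \<subseteq> univ A)"

definition hom :: "('r, 'a) struc \<Rightarrow> ('r, 'b) struc \<Rightarrow> ('a \<Rightarrow> 'b) \<Rightarrow> bool" where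
  "hom A B f \<longleftrightarrow> f ` univ A \<subseteq> univ B \<and> (\<forall>R. \<forall>t \<in> rels A R. map f t \<in> rels B R)"

definition eps :: "('a \<times> nat) list \<Rightarrow> 'a" where
  "eps s = fst (last s)"

definition Tuniv :: "nat \<Rightarrow> ('r, 'a) struc \<Rightarrow> ('a \<times> nat) list set" where
  "Tuniv k A = {s. s \<noteq> [] \<and> set s \<subseteq> univ A \<times> {1..k}}"

definition Tk :: "nat \<Rightarrow> ('r, 'a) struc \<Rightarrow> ('r, ('a \<times> nat) list) struc" where
  "Tk k A = \<lparr> univ = Tuniv k A,
     rels = (\<lambda>R. {ss. set ss \<subseteq> Tuniv k A
        \<and> (\<forall>i<length ss. \<forall>j<length ss. prefix (ss!i) (ss!j) \<or> prefix (ss!j) (ss!i))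
        \<and> map eps ss \<in> rels A R
        \<and> (\<forall>i<length ss. \<forall>j<length ss. prefix (ss!i) (ss!j) \<longrightarrow>
             (\<forall>u. strict_prefix (ss!i) u \<and> prefix u (ss!j) \<longrightarrow>
                  snd (last u) \<noteq> snd (last (ss!i)))) }) \<rparr>"

definition Tmap :: "('a \<Rightarrow> 'b) \<Rightarrow> ('a \<times> nat) list \<Rightarrow> ('b \<times> nat) list" where
  "Tmap f s = map (\<lambda>(a, p). (f a, p)) s"

definition delta :: "('a \<times> nat) list \<Rightarrow> (('a \<times> nat) list \<times> nat) list" where
  "delta s = map (\<lambda>i. (take (Suc i) s, snd (s ! i))) [0..<length s]"

definition basic :: "nat \<Rightarrow> ('a \<times> nat) list \<Rightarrow> bool" where
  "basic n s \<longleftrightarrow> length s \<le> n \<and> distinct (map snd s)"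

definition longest_basic :: "nat \<Rightarrow> ('a \<times> nat) list \<Rightarrow> nat" where
  "longest_basic n s = Max {m. m \<le> length s \<and> basic n (take m s)}"

function Sn :: "nat \<Rightarrow> ('a \<times> nat) list \<Rightarrow> ('a \<times> nat) list list" where
  "Sn n s = (if basic n s then [s] else
     (if longest_basic n s = 0 then [s]
      else take (longest_basic n s) s # Sn n (drop (longest_basic n s) s)))"
  by pat_completeness auto
termination
  apply (relation "measure (\<lambda>(n, s). length s)")
   apply simp
  apply (clarsimp simp: basic_def)
  apply (case_tac s)
   apply auto
  done

definition alpha :: "nat \<Rightarrow> ('a \<times> nat) list \<Rightarrow> nat \<Rightarrow> ('a \<times> nat) list list" where
  "alpha n s p = (let bs = Sn n s; b = last bs in
     if length b = n \<or> p \<in> snd ` set b then bs else butlast bs)"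

definition approx :: "nat \<Rightarrow> ('a \<times> nat) list \<Rightarrow> ('a \<times> nat) list \<Rightarrow> bool" where
  "approx n u v \<longleftrightarrow> u \<noteq> [] \<and> v \<noteq> [] \<and> fst (last u) = fst (last v) \<and>
     alpha n (butlast u) (snd (last u)) = alpha n (butlast v) (snd (last v))"

definition qmap :: "nat \<Rightarrow> nat \<Rightarrow> ('r, 'a) struc \<Rightarrow> ('a \<times> nat) list \<Rightarrow> ('a \<times> nat) list set" where
  "qmap n k A s = {t \<in> univ (Tk k A). approx n s t}"

definition Hk :: "nat \<Rightarrow> nat \<Rightarrow> ('r, 'a) struc \<Rightarrow> ('r, ('a \<times> nat) list set) struc" where
  "Hk n k A = \<lparr> univ = qmap n k A ` univ (Tk k A),
     rels = (\<lambda>R. map (qmap n k A) ` rels (Tk k A) R) \<rparr>"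

definition Hmap :: "nat \<Rightarrow> nat \<Rightarrow> ('r, 'b) struc \<Rightarrow> ('a \<Rightarrow> 'b) \<Rightarrow> ('a \<times> nat) list set \<Rightarrow> ('b \<times> nat) list set" where
  "Hmap n k B f c = qmap n k B (Tmap f (SOME s. s \<in> c))"

definition epsH :: "('a \<times> nat) list set \<Rightarrow> 'a" where
  "epsH c = eps (SOME s. s \<in> c)"

definition deltaH :: "nat \<Rightarrow> nat \<Rightarrow> ('r, 'a) struc \<Rightarrow> ('a \<times> nat) list set \<Rightarrow> (('a \<times> nat) list set \<times> nat) list set" where
  "deltaH n k A c = qmap n k (Hk n k A) (Tmap (qmap n k A) (delta (SOME s. s \<in> c)))"

end

theory Submission
  imports Defs
begin

lemma prefix_iff_take: "prefix a b \<longleftrightarrow> length a \<le> length b \<and> a = take (length a) b"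
proof
  assume "prefix a b" then show "length a \<le> length b \<and> a = take (length a) b"
    by (auto simp: prefix_def)
next
  assume "length a \<le> length b \<and> a = take (length a) b"
  then show "prefix a b" by (metis take_is_prefix)
qed
declare Sn.simps[simp del]

fun cut :: "nat list \<Rightarrow> 'a list \<Rightarrow> 'a list list" where
  "cut [] xs = []" | "cut (l#ls) xs = take l xs # cut ls (drop l xs)"
lemma cut_append_concat: "cut (map length L) (concat L @ R) = L"
  by (induction L) auto

lemma concat_cut: "concat (cut ls xs) = take (sum_list ls) xs"
  by (induction ls arbitrary: xs) (auto simp: take_add)

lemma cut_take: "cut ls (take (sum_list ls) xs) = cut ls xs"
  by (induction ls arbitrary: xs) (auto simp: drop_take)

lemma cut_map: "cut ls (map h xs) = map (map h) (cut ls xs)"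
  by (induction ls arbitrary: xs) (auto simp: take_map drop_map)

lemma Sn_nonempty: "Sn n xs \<noteq> []"
  by (subst Sn.simps) auto

lemma concat_Sn: "concat (Sn n xs) = xs"
proof (induction n xs rule: Sn.induct)
  case (1 n s)
  show ?case using 1 by (subst Sn.simps) auto
qed

lemma Sn_shape: "map snd xs = map snd ys \<Longrightarrow> map (map snd) (Sn n xs) = map (map snd) (Sn n ys)"
proof (induction n xs arbitrary: ys rule: Sn.induct)
  case (1 n s)
  have tk: "map snd (take m s) = map snd (take m ys)" for m using 1(2) by (metis take_map)
  have len: "length s = length ys" using 1(2) by (metis length_map)
  have bt: "basic n (take m s) = basic n (take m ys)" for m
    unfolding basic_def using tk[of m] by (metis length_map)
  have b: "basic n s = basic n ys" using bt[of "length s"] len by simp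
  have lb: "longest_basic n s = longest_basic n ys"
    unfolding longest_basic_def using bt len by simp
  have dr: "map snd (drop m s) = map snd (drop m ys)" for m using 1(2) by (metis drop_map)
  show ?case
  proof (cases "basic n s \<or> longest_basic n s = 0")
    case True
    then show ?thesis using b lb 1(2) by (subst (1 2) Sn.simps) auto
  next
    case False
    have ih: "map (map snd) (Sn n (drop (longest_basic n s) s)) = map (map snd) (Sn n (drop (longest_basic n s) ys))"
      using 1(1) False dr by blast
    show ?thesis using False b lb ih tk by (subst (1 2) Sn.simps) auto
  qed
qed

lemma alpha_shape: assumes "map snd xs = map snd ys"
  shows "map length (alpha n xs p) = map length (alpha n ys p)"
proof -
  have S: "map (map snd) (Sn n xs) = map (map snd) (Sn n ys)" using Sn_shape[OF assms] .
  have lx: "last (map (map snd) (Sn n xs)) = map snd (last (Sn n xs))"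
    by (simp add: last_map Sn_nonempty)
  have ly: "last (map (map snd) (Sn n ys)) = map snd (last (Sn n ys))"
    by (simp add: last_map Sn_nonempty)
  have ml: "map snd (last (Sn n xs)) = map snd (last (Sn n ys))" using S lx ly by simp
  have L: "length (last (Sn n xs)) = length (last (Sn n ys))"
    using arg_cong[OF ml, of length] by simp
  have P: "(p \<in> snd ` set (last (Sn n xs))) = (p \<in> snd ` set (last (Sn n ys)))"
    using arg_cong[OF ml, of set] by simp
  have "map (map snd) (alpha n xs p) = map (map snd) (alpha n ys p)"
    unfolding alpha_def Let_def using S L P by (simp add: map_butlast)
  then have "map length (map (map snd) (alpha n xs p)) = map length (map (map snd) (alpha n ys p))"
    by simp
  then show ?thesis by (simp add: comp_def)
qed

lemma alpha_cut: "alpha n xs p = cut (map length (alpha n xs p)) xs"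
proof -
  have "prefix (alpha n xs p) (Sn n xs)"
    unfolding alpha_def Let_def by (simp add: prefixeq_butlast)
  then obtain R where "Sn n xs = alpha n xs p @ R" by (auto simp: prefix_def)
  then have "xs = concat (alpha n xs p) @ concat R" by (metis concat_Sn concat_append)
  then show ?thesis by (metis cut_append_concat)
qed

lemma alpha_map: assumes "\<And>x. snd (h x) = snd x"
  shows "alpha n (map h xs) p = map (map h) (alpha n xs p)"
proof -
  have "map snd (map h xs) = map snd xs" using assms by simp
  then have "map length (alpha n (map h xs) p) = map length (alpha n xs p)" by (rule alpha_shape)
  then show ?thesis by (metis alpha_cut cut_map)
qed


lemma length_delta[simp]: "length (delta s) = length s"
  by (simp add: delta_def)

lemma nth_delta: "i < length s \<Longrightarrow> delta s ! i = (take (Suc i) s, snd (s ! i))"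
  by (simp add: delta_def)

lemma take_delta: "take N (delta s) = delta (take N s)"
  by (rule nth_equalityI) (auto simp: nth_delta)

lemma butlast_delta: "butlast (delta s) = delta (butlast s)"
  by (simp add: butlast_conv_take take_delta)

lemma delta_nil[simp]: "(delta s = []) = (s = [])"
  by (metis length_delta length_0_conv)

lemma last_delta: assumes "s \<noteq> []" shows "last (delta s) = (s, snd (last s))"
proof -
  have "last (delta s) = delta s ! (length s - 1)" using assms by (simp add: last_conv_nth)
  also have "\<dots> = (take (Suc (length s - 1)) s, snd (s ! (length s - 1)))"
    using assms by (simp add: nth_delta)
  also have "\<dots> = (s, snd (last s))" using assms by (simp add: last_conv_nth)
  finally show ?thesis .
qed

lemma map_snd_delta: "map snd (delta s) = map snd s"
  by (rule nth_equalityI) (auto simp: nth_delta)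

lemma set_delta: "x \<in> set (delta s) \<Longrightarrow> \<exists>i<length s. x = (take (Suc i) s, snd (s ! i))"
  by (auto simp: in_set_conv_nth nth_delta)

lemma Tmap_map: "Tmap h = map (\<lambda>(a, p). (h a, p))"
  by (simp add: Tmap_def fun_eq_iff)

lemma map_snd_Tmap: "map snd (Tmap h s) = map snd s"
  by (auto simp: Tmap_def)

lemma length_Tmap[simp]: "length (Tmap h s) = length s"
  by (simp add: Tmap_def)

lemma take_Tmap: "take N (Tmap h s) = Tmap h (take N s)"
  by (simp add: Tmap_def take_map)

lemma butlast_Tmap: "butlast (Tmap h s) = Tmap h (butlast s)"
  by (simp add: Tmap_def map_butlast)

lemma last_Tmap: "s \<noteq> [] \<Longrightarrow> last (Tmap h s) = (h (fst (last s)), snd (last s))"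
  by (simp add: Tmap_def last_map split: prod.splits)

lemma Tmap_nil[simp]: "(Tmap h s = []) = (s = [])"
  by (simp add: Tmap_def)

lemma alpha_Tmap: "alpha n (Tmap h xs) p = map (Tmap h) (alpha n xs p)"
  unfolding Tmap_map by (rule alpha_map) auto

lemma approx_sym: "approx n a b \<Longrightarrow> approx n b a"
  by (auto simp: approx_def)

lemma approx_trans: "approx n a b \<Longrightarrow> approx n b c \<Longrightarrow> approx n a c"
  by (auto simp: approx_def)

lemma approx_refl: "a \<noteq> [] \<Longrightarrow> approx n a a"
  by (auto simp: approx_def)

lemma qmap_eq: "approx n a b \<Longrightarrow> qmap n k A a = qmap n k A b"
  unfolding qmap_def by (blast intro: approx_trans approx_sym)

lemma Tuniv_ne: "s \<in> univ (Tk k A) \<Longrightarrow> s \<noteq> []"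
  by (simp add: Tk_def Tuniv_def)

lemma qmap_self: "s \<in> univ (Tk k A) \<Longrightarrow> s \<in> qmap n k A s"
  by (simp add: qmap_def approx_refl Tuniv_ne)

lemma some_qmap: assumes "s \<in> univ (Tk k A)"
  shows "(SOME t. t \<in> qmap n k A s) \<in> univ (Tk k A) \<and> approx n s (SOME t. t \<in> qmap n k A s)"
proof -
  have "(SOME t. t \<in> qmap n k A s) \<in> qmap n k A s" using qmap_self[OF assms] by (rule someI)
  then show ?thesis by (simp add: qmap_def)
qed

lemma epsH_qmap: "s \<in> univ (Tk k A) \<Longrightarrow> epsH (qmap n k A s) = eps s"
  using some_qmap[of s k A n] by (simp add: epsH_def eps_def approx_def)

lemma approx_Tmap: "approx n a b \<Longrightarrow> approx n (Tmap g a) (Tmap g b)"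
  by (auto simp: approx_def last_Tmap butlast_Tmap alpha_Tmap)

lemma alpha_delta: assumes "alpha n P p = alpha n Q q"
  shows "alpha n (Tmap h (delta P)) p = alpha n (Tmap h (delta Q)) q"
proof -
  define ls where "ls = map length (alpha n P p)"
  define N where "N = sum_list ls"
  have ls2: "ls = map length (alpha n Q q)" using assms ls_def by simp
  have l1: "map length (alpha n (Tmap h (delta P)) p) = ls"
    unfolding ls_def by (rule alpha_shape) (simp add: map_snd_Tmap map_snd_delta)
  have l2: "map length (alpha n (Tmap h (delta Q)) q) = ls"
    unfolding ls2 by (rule alpha_shape) (simp add: map_snd_Tmap map_snd_delta)
  have "take N P = concat (cut ls P)" by (simp add: concat_cut N_def)
  also have "cut ls P = alpha n P p" using alpha_cut[of n P p] ls_def by simp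
  also have "\<dots> = alpha n Q q" by (rule assms)
  also have "\<dots> = cut ls Q" using alpha_cut[of n Q q] ls2 by simp
  also have "concat \<dots> = take N Q" by (simp add: concat_cut N_def)
  finally have tk: "take N P = take N Q" .
  have "alpha n (Tmap h (delta P)) p = cut ls (Tmap h (delta P))"
    using alpha_cut[of n "Tmap h (delta P)" p] l1 by simp
  also have "\<dots> = cut ls (take N (Tmap h (delta P)))" by (simp add: cut_take N_def)
  also have "\<dots> = cut ls (take N (Tmap h (delta Q)))" by (simp add: take_Tmap take_delta tk)
  also have "\<dots> = cut ls (Tmap h (delta Q))" by (simp add: cut_take N_def)
  also have "\<dots> = alpha n (Tmap h (delta Q)) q"
    using alpha_cut[of n "Tmap h (delta Q)" q] l2 by simp
  finally show ?thesis .
qed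

lemma approx_Phi: assumes "s \<in> univ (Tk k A)" "t \<in> univ (Tk k A)" "approx n s t"
  shows "approx n (Tmap (qmap n k A) (delta s)) (Tmap (qmap n k A) (delta t))"
proof -
  have ne: "s \<noteq> []" "t \<noteq> []" using assms Tuniv_ne by auto
  have q: "qmap n k A s = qmap n k A t" using assms(3) by (rule qmap_eq)
  have a: "alpha n (butlast s) (snd (last s)) = alpha n (butlast t) (snd (last t))"
    using assms(3) by (simp add: approx_def)
  show ?thesis using ne q alpha_delta[OF a, of "qmap n k A"]
    by (simp add: approx_def last_Tmap last_delta butlast_Tmap butlast_delta)
qed


lemma univ_Tk: "univ (Tk k A) = Tuniv k A"
  by (simp add: Tk_def)

lemma rels_Tk: "rels (Tk k A) R = {ss. set ss \<subseteq> Tuniv k A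
        \<and> (\<forall>i<length ss. \<forall>j<length ss. prefix (ss!i) (ss!j) \<or> prefix (ss!j) (ss!i))
        \<and> map eps ss \<in> rels A R
        \<and> (\<forall>i<length ss. \<forall>j<length ss. prefix (ss!i) (ss!j) \<longrightarrow>
             (\<forall>u. strict_prefix (ss!i) u \<and> prefix u (ss!j) \<longrightarrow>
                  snd (last u) \<noteq> snd (last (ss!i)))) }"
  by (simp add: Tk_def)

lemma univ_Hk: "univ (Hk n k A) = qmap n k A ` univ (Tk k A)"
  by (simp add: Hk_def)

lemma rels_Hk: "rels (Hk n k A) R = map (qmap n k A) ` rels (Tk k A) R"
  by (simp add: Hk_def)

lemma take_Tuniv: "s \<in> Tuniv k A \<Longrightarrow> 0 < m \<Longrightarrow> take m s \<in> Tuniv k A"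
  unfolding Tuniv_def using set_take_subset[of m s] by auto

lemma Phi_univ: assumes "s \<in> univ (Tk k A)"
  shows "Tmap (qmap n k A) (delta s) \<in> univ (Tk k (Hk n k A))"
proof -
  have s: "s \<in> Tuniv k A" using assms by (simp add: univ_Tk)
  have "x \<in> univ (Hk n k A) \<times> {1..k}" if xin: "x \<in> set (Tmap (qmap n k A) (delta s))" for x
  proof -
    obtain a p where ap: "(a, p) \<in> set (delta s)" "x = (qmap n k A a, p)"
      using xin unfolding Tmap_def by (auto split: prod.splits)
    then obtain i where i: "i < length s" "a = take (Suc i) s" "p = snd (s ! i)"
      using set_delta by fastforce
    have aU: "a \<in> univ (Tk k A)" using take_Tuniv[OF s] i by (simp add: univ_Tk)
    have "s ! i \<in> univ A \<times> {1..k}" using nth_mem[OF i(1)] s unfolding Tuniv_def by blast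
    then have "p \<in> {1..k}" using i by auto
    then show ?thesis using ap imageI[OF aU, of "qmap n k A"] by (simp add: univ_Hk)
  qed
  then show ?thesis using s by (auto simp: univ_Tk Tuniv_def)
qed

lemma deltaH_qmap: assumes "s \<in> univ (Tk k A)"
  shows "deltaH n k A (qmap n k A s) = qmap n k (Hk n k A) (Tmap (qmap n k A) (delta s))"
proof -
  let ?t = "SOME t. t \<in> qmap n k A s"
  have t: "?t \<in> univ (Tk k A)" "approx n s ?t" using some_qmap[OF assms] by auto
  show ?thesis unfolding deltaH_def
    by (rule qmap_eq, rule approx_sym, rule approx_Phi[OF assms t(1) t(2)])
qed

lemma eps_Phi: "s \<noteq> [] \<Longrightarrow> eps (Tmap h (delta s)) = h s"
  by (simp add: eps_def last_Tmap last_delta)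

lemma snd_last_Phi: "s \<noteq> [] \<Longrightarrow> snd (last (Tmap h (delta s))) = snd (last s)"
  by (simp add: last_Tmap last_delta)

lemma Phi_take: "Tmap h (delta (take m s)) = take m (Tmap h (delta s))"
  by (simp add: take_Tmap take_delta)

lemma prefix_Phi: assumes "prefix a b" shows "prefix (Tmap h (delta a)) (Tmap h (delta b))"
proof -
  have "a = take (length a) b" using assms prefix_iff_take by blast
  then have "Tmap h (delta a) = take (length a) (Tmap h (delta b))" by (metis Phi_take)
  then show ?thesis by (simp add: take_is_prefix)
qed

lemma prefix_Phi_rev: assumes "prefix a b \<or> prefix b a" "prefix (Tmap h (delta a)) (Tmap h (delta b))"
  shows "prefix a b"
proof (cases "prefix a b")
  case False
  then have ba: "prefix b a" using assms(1) by blast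
  then have "prefix (Tmap h (delta b)) (Tmap h (delta a))" by (rule prefix_Phi)
  then have "Tmap h (delta a) = Tmap h (delta b)" using assms(2) by (simp add: prefix_order.antisym)
  then have "length a = length b" by (metis length_Tmap length_delta)
  then have "b = a" using ba prefix_iff_take by (metis take_all order_refl)
  then show ?thesis by simp
qed simp

lemma prefix_Phi_elim: assumes "prefix u (Tmap h (delta b))"
  shows "u = Tmap h (delta (take (length u) b)) \<and> length u \<le> length b"
proof -
  have "length u \<le> length (Tmap h (delta b)) \<and> u = take (length u) (Tmap h (delta b))"
    using assms prefix_iff_take by blast
  then show ?thesis by (simp add: Phi_take)
qed


lemma univ_HkE: assumes "c \<in> univ (Hk n k A)"
  obtains s where "s \<in> univ (Tk k A)" "c = qmap n k A s"
  using assms by (auto simp: univ_Hk)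

lemma hom_epsH: "hom (Hk n k A) A epsH"
  unfolding hom_def
proof (intro conjI allI ballI subsetI)
  fix x assume "x \<in> epsH ` univ (Hk n k A)"
  then obtain s where s: "s \<in> univ (Tk k A)" "x = epsH (qmap n k A s)"
    by (auto simp: univ_Hk)
  then have x: "x = fst (last s)" by (simp add: epsH_qmap eps_def)
  have "set s \<subseteq> univ A \<times> {1..k}" using s(1) by (simp add: univ_Tk Tuniv_def)
  then have "last s \<in> univ A \<times> {1..k}" using last_in_set[OF Tuniv_ne[OF s(1)]] by blast
  then show "x \<in> univ A" using x by auto
next
  fix R t assume "t \<in> rels (Hk n k A) R"
  then obtain ss where ss: "ss \<in> rels (Tk k A) R" "t = map (qmap n k A) ss"
    by (auto simp: rels_Hk)
  have "set ss \<subseteq> univ (Tk k A)" using ss(1) by (simp add: rels_Tk univ_Tk)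
  then have "map epsH t = map eps ss" using ss(2) by (auto simp: epsH_qmap)
  then show "map epsH t \<in> rels A R" using ss(1) by (simp add: rels_Tk)
qed

lemma hom_deltaH: "hom (Hk n k A) (Hk n k (Hk n k A)) (deltaH n k A)"
  unfolding hom_def
proof (intro conjI allI ballI subsetI)
  fix x assume "x \<in> deltaH n k A ` univ (Hk n k A)"
  then obtain s where s: "s \<in> univ (Tk k A)" "x = deltaH n k A (qmap n k A s)"
    by (auto simp: univ_Hk)
  then show "x \<in> univ (Hk n k (Hk n k A))"
    by (simp add: deltaH_qmap univ_Hk[of n k "Hk n k A"] Phi_univ)
next
  fix R t assume "t \<in> rels (Hk n k A) R"
  then obtain ss where ss: "ss \<in> rels (Tk k A) R" "t = map (qmap n k A) ss"
    by (auto simp: rels_Hk)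
  define h where "h = qmap n k A"
  define ts where "ts = map (\<lambda>x. Tmap h (delta x)) ss"
  have ssU: "set ss \<subseteq> Tuniv k A" using ss(1) by (simp add: rels_Tk)
  have ne: "x \<noteq> []" if "x \<in> set ss" for x using ssU that by (auto simp: Tuniv_def)
  have cmp: "\<forall>i<length ss. \<forall>j<length ss. prefix (ss!i) (ss!j) \<or> prefix (ss!j) (ss!i)"
    using ss(1) by (simp add: rels_Tk)
  have peb: "\<forall>i<length ss. \<forall>j<length ss. prefix (ss!i) (ss!j) \<longrightarrow>
             (\<forall>u. strict_prefix (ss!i) u \<and> prefix u (ss!j) \<longrightarrow>
                  snd (last u) \<noteq> snd (last (ss!i)))"
    using ss(1) by (simp add: rels_Tk)
  have m1: "map (deltaH n k A) t = map (qmap n k (Hk n k A)) ts"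
    using ssU by (auto simp: ss(2) ts_def h_def deltaH_qmap univ_Tk)
  have "ts \<in> rels (Tk k (Hk n k A)) R"
    unfolding rels_Tk
  proof (intro CollectI conjI allI impI)
    show "set ts \<subseteq> Tuniv k (Hk n k A)"
      using ssU Phi_univ[of _ k A n] by (auto simp: ts_def h_def univ_Tk)
  next
    fix i j assume ij: "i < length ts" "j < length ts"
    then show "prefix (ts ! i) (ts ! j) \<or> prefix (ts ! j) (ts ! i)"
      using cmp prefix_Phi[of "ss!i" "ss!j" h] prefix_Phi[of "ss!j" "ss!i" h] by (auto simp: ts_def)
  next
    have "map eps ts = map h ss" using ne by (auto simp: ts_def eps_Phi)
    then show "map eps ts \<in> rels (Hk n k A) R" using ss(1) by (simp add: rels_Hk h_def)
  next
    fix i j u assume ij: "i < length ts" "j < length ts" and pij: "prefix (ts ! i) (ts ! j)"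
      and u: "strict_prefix (ts ! i) u \<and> prefix u (ts ! j)"
    have ij': "i < length ss" "j < length ss" using ij by (auto simp: ts_def)
    have tsi: "ts ! i = Tmap h (delta (ss ! i))" "ts ! j = Tmap h (delta (ss ! j))"
      using ij' by (auto simp: ts_def)
    have pre: "prefix (ss ! i) (ss ! j)"
      using prefix_Phi_rev[of "ss ! i" "ss ! j" h] cmp ij' pij tsi by auto
    define u' where "u' = take (length u) (ss ! j)"
    have uu: "u = Tmap h (delta u')" "length u \<le> length (ss ! j)"
      using prefix_Phi_elim[of u h "ss ! j"] u tsi by (auto simp: u'_def)
    have lu: "length (ss ! i) < length u"
      using prefix_length_less[of "ts ! i" u] u tsi by simp
    have lu': "length u' = length u" using uu(2) by (simp add: u'_def)
    have "ss ! i = take (length (ss ! i)) (ss ! j)" using pre prefix_iff_take by blast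
    then have "prefix (ss ! i) u'" unfolding u'_def using lu
      by (metis less_imp_le_nat prefix_iff_take take_is_prefix take_take min.absorb1)
    then have sp: "strict_prefix (ss ! i) u'" using lu lu' by (metis order.strict_iff_not prefix_order.le_less less_irrefl)
    have pu: "prefix u' (ss ! j)" by (simp add: u'_def take_is_prefix)
    have neq: "snd (last u') \<noteq> snd (last (ss ! i))" using peb ij' pre sp pu by blast
    have "u' \<noteq> []" using lu lu' by auto
    then have "snd (last u) = snd (last u')" using uu by (simp add: snd_last_Phi)
    moreover have "snd (last (ts ! i)) = snd (last (ss ! i))"
      using tsi ne ij' by (simp add: snd_last_Phi)
    ultimately show "snd (last u) \<noteq> snd (last (ts ! i))" using neq by simp
  qed
  then show "map (deltaH n k A) t \<in> rels (Hk n k (Hk n k A)) R"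
    using m1 by (simp add: rels_Hk)
qed


lemma Hmap_qmap: assumes "s \<in> univ (Tk k A)"
  shows "Hmap n k B f (qmap n k A s) = qmap n k B (Tmap f s)"
proof -
  let ?t = "SOME t. t \<in> qmap n k A s"
  have t: "approx n s ?t" using some_qmap[OF assms] by auto
  show ?thesis unfolding Hmap_def
    by (rule qmap_eq, rule approx_Tmap, rule approx_sym, rule t)
qed

lemma Tmap_univ: assumes "hom A B f" "s \<in> univ (Tk k A)"
  shows "Tmap f s \<in> univ (Tk k B)"
proof -
  have "f ` univ A \<subseteq> univ B" using assms(1) by (simp add: hom_def)
  then show ?thesis using assms(2) by (force simp: univ_Tk Tuniv_def Tmap_def)
qed

lemma nth_Tmap: "i < length s \<Longrightarrow> Tmap h s ! i = (h (fst (s ! i)), snd (s ! i))"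
  by (simp add: Tmap_def split: prod.splits)

lemma nat_eps: assumes "hom A B f" "c \<in> univ (Hk n k A)"
  shows "f (epsH c) = epsH (Hmap n k B f c)"
proof -
  obtain s where s: "s \<in> univ (Tk k A)" "c = qmap n k A s" using assms(2) by (rule univ_HkE)
  have "epsH (Hmap n k B f c) = eps (Tmap f s)"
    using s Tmap_univ[OF assms(1) s(1)] by (simp add: Hmap_qmap epsH_qmap)
  also have "\<dots> = f (eps s)" using Tuniv_ne[OF s(1)] by (simp add: eps_def last_Tmap)
  finally show ?thesis using s by (simp add: epsH_qmap)
qed

lemma nat_delta: assumes "hom A B f" "c \<in> univ (Hk n k A)"
  shows "deltaH n k B (Hmap n k B f c) = Hmap n k (Hk n k B) (Hmap n k B f) (deltaH n k A c)"
proof -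
  obtain s where s: "s \<in> univ (Tk k A)" "c = qmap n k A s" using assms(2) by (rule univ_HkE)
  have fs: "Tmap f s \<in> univ (Tk k B)" by (rule Tmap_univ[OF assms(1) s(1)])
  have L: "deltaH n k B (Hmap n k B f c) = qmap n k (Hk n k B) (Tmap (qmap n k B) (delta (Tmap f s)))"
    using s fs by (simp add: Hmap_qmap deltaH_qmap)
  have R: "Hmap n k (Hk n k B) (Hmap n k B f) (deltaH n k A c)
      = qmap n k (Hk n k B) (Tmap (Hmap n k B f) (Tmap (qmap n k A) (delta s)))"
    using s Phi_univ[OF s(1), of n] by (simp add: deltaH_qmap Hmap_qmap)
  have sU: "s \<in> Tuniv k A" using s(1) by (simp add: univ_Tk)
  have "Tmap (qmap n k B) (delta (Tmap f s)) = Tmap (Hmap n k B f) (Tmap (qmap n k A) (delta s))"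
  proof (rule nth_equalityI)
    fix i assume "i < length (Tmap (qmap n k B) (delta (Tmap f s)))"
    then have i: "i < length s" by simp
    have tu: "take (Suc i) s \<in> univ (Tk k A)" using take_Tuniv[OF sU] by (simp add: univ_Tk)
    show "Tmap (qmap n k B) (delta (Tmap f s)) ! i = Tmap (Hmap n k B f) (Tmap (qmap n k A) (delta s)) ! i"
      using i tu by (simp add: nth_Tmap nth_delta take_Tmap Hmap_qmap)
  qed simp
  then show ?thesis using L R by simp
qed


theorem lemma3p11:
  fixes ar :: "'r \<Rightarrow> nat" and n k :: nat
  assumes "1 \<le> n" and "n \<le> k"
  shows
  "(\<forall>A :: ('r, 'a) struc. sigma_struc ar A \<longrightarrow>
        hom (Hk n k A) A epsH
      \<and> (\<forall>s \<in> univ (Tk k A). eps s = epsH (qmap n k A s))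
      \<and> (\<forall>e. hom (Hk n k A) A e \<and> (\<forall>s \<in> univ (Tk k A). eps s = e (qmap n k A s))
             \<longrightarrow> (\<forall>c \<in> univ (Hk n k A). e c = epsH c))
      \<and> (\<forall>s \<in> univ (Tk k A). \<forall>t \<in> univ (Tk k A). approx n s t \<longrightarrow>
             qmap n k (Hk n k A) (Tmap (qmap n k A) (delta s))
           = qmap n k (Hk n k A) (Tmap (qmap n k A) (delta t)))
      \<and> (\<forall>s \<in> univ (Tk k A).
             deltaH n k A (qmap n k A s) = qmap n k (Hk n k A) (Tmap (qmap n k A) (delta s)))
      \<and> hom (Hk n k A) (Hk n k (Hk n k A)) (deltaH n k A))
   \<and> (\<forall>(A :: ('r, 'a) struc) (B :: ('r, 'b) struc) f.
        sigma_struc ar A \<and> sigma_struc ar B \<and> hom A B f \<longrightarrow>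
          (\<forall>c \<in> univ (Hk n k A). f (epsH c) = epsH (Hmap n k B f c))
        \<and> (\<forall>c \<in> univ (Hk n k A).
             deltaH n k B (Hmap n k B f c)
           = Hmap n k (Hk n k B) (Hmap n k B f) (deltaH n k A c)))"
  proof (intro conjI allI impI ballI)
  fix A :: "('r, 'a) struc"
  show "hom (Hk n k A) A epsH" by (rule hom_epsH)
  show "\<And>s. s \<in> univ (Tk k A) \<Longrightarrow> eps s = epsH (qmap n k A s)" by (simp add: epsH_qmap)
  show "\<And>e c. hom (Hk n k A) A e \<and> (\<forall>s\<in>univ (Tk k A). eps s = e (qmap n k A s)) \<Longrightarrow>
      c \<in> univ (Hk n k A) \<Longrightarrow> e c = epsH c"
    by (auto simp: univ_Hk epsH_qmap)
  show "\<And>s t. s \<in> univ (Tk k A) \<Longrightarrow> t \<in> univ (Tk k A) \<Longrightarrow> approx n s t \<Longrightarrow>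
      qmap n k (Hk n k A) (Tmap (qmap n k A) (delta s)) = qmap n k (Hk n k A) (Tmap (qmap n k A) (delta t))"
    by (rule qmap_eq, rule approx_Phi)
  show "\<And>s. s \<in> univ (Tk k A) \<Longrightarrow>
      deltaH n k A (qmap n k A s) = qmap n k (Hk n k A) (Tmap (qmap n k A) (delta s))"
    by (rule deltaH_qmap)
  show "hom (Hk n k A) (Hk n k (Hk n k A)) (deltaH n k A)" by (rule hom_deltaH)
next
  fix A :: "('r, 'a) struc" and B :: "('r, 'b) struc" and f
  assume h: "sigma_struc ar A \<and> sigma_struc ar B \<and> hom A B f"
  show "\<And>c. c \<in> univ (Hk n k A) \<Longrightarrow> f (epsH c) = epsH (Hmap n k B f c)"
    using h nat_eps by blast
  show "\<And>c. c \<in> univ (Hk n k A) \<Longrightarrow>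
      deltaH n k B (Hmap n k B f c) = Hmap n k (Hk n k B) (Hmap n k B f) (deltaH n k A c)"
    using h nat_delta by blast
qed

end
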